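(* Let $A=[a_{ij}]\in\mathcal{M}_3(\mathbb{H})$ be strictly upper triangular and suppose that the two quaternions $a_{12}$ and $a_{13}a_{23}^*$ are linearly independent over $\mathbb{R}$. Let $M=\max\{\pi_{\mathbb{R}}(\mathbf{x}^*A\mathbf{x}):\mathbf{x}\in\mathbb{S}_{\mathbb{H}^3}\}$ and let $\mathbf{y}=(y_1,y_2,y_3)\in\mathbb{S}_{\mathbb{H}^3}$ satisfy $\pi_{\mathbb{R}}(\mathbf{y}^*A\mathbf{y})=M$. Then $$y_1^*(a_{12}y_2+a_{13}y_3),\quad y_2^*(a_{12}^*y_1+a_{23}y_3),\quad (y_1^*a_{13}+y_2^*a_{23})y_3$$ all belong to $\mathbb{R}\setminus\{0\}$.
   Context: $\mathbb{H}$ denotes the real quaternions with conjugation $q\mapsto q^*$; for $q=a_0+a_1i+a_2j+a_3k$, $\pi_{\mathbb{R}}(q)=a_0$ is its real part. $\mathbb{S}_{\mathbb{H}^3}=\{\mathbf{x}\in\mathbb{H}^3:\mathbf{x}^*\mathbf{x}=1\}$, where $\mathbf{x}^*$ is the conjugate transpose. *)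

theory Defs
  imports "HOL-Analysis.Analysis"
begin

datatype quat = Quat (qRe: real) (qI: real) (qJ: real) (qK: real)

lemma quat_eqI: "qRe a = qRe b \<Longrightarrow> qI a = qI b \<Longrightarrow> qJ a = qJ b \<Longrightarrow> qK a = qK b \<Longrightarrow> a = b"
  by (cases a; cases b) auto

instantiation quat :: real_algebra_1
begin
definition "0 = Quat 0 0 0 0"
definition "1 = Quat 1 0 0 0"
definition "a + b = Quat (qRe a + qRe b) (qI a + qI b) (qJ a + qJ b) (qK a + qK b)"
definition "- a = Quat (- qRe a) (- qI a) (- qJ a) (- qK a)"
definition "a - b = Quat (qRe a - qRe b) (qI a - qI b) (qJ a - qJ b) (qK a - qK b)"
definition "scaleR r a = Quat (r * qRe a) (r * qI a) (r * qJ a) (r * qK a)"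
definition "a * b = Quat
   (qRe a * qRe b - qI a * qI b - qJ a * qJ b - qK a * qK b)
   (qRe a * qI b + qI a * qRe b + qJ a * qK b - qK a * qJ b)
   (qRe a * qJ b - qI a * qK b + qJ a * qRe b + qK a * qI b)
   (qRe a * qK b + qI a * qJ b - qJ a * qI b + qK a * qRe b)"
instance
  by standard (auto intro!: quat_eqI simp: zero_quat_def one_quat_def plus_quat_def
      uminus_quat_def minus_quat_def scaleR_quat_def times_quat_def algebra_simps)
end

definition qcnj :: "quat \<Rightarrow> quat" where
  "qcnj a = Quat (qRe a) (- qI a) (- qJ a) (- qK a)"

text \<open>Real part \<pi>_R is qRe.  Vectors of H^3 are functions nat \<Rightarrow> quat on
  indices {1..3}; 3x3 matrices are functions nat \<Rightarrow> nat \<Rightarrow> quat on {1..3}x{1..3}.\<close>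

definition unit_sphere_H3 :: "(nat \<Rightarrow> quat) set" where
  "unit_sphere_H3 = {x. (\<Sum>i\<in>{1..3::nat}. qcnj (x i) * x i) = 1}"

definition qform :: "(nat \<Rightarrow> nat \<Rightarrow> quat) \<Rightarrow> (nat \<Rightarrow> quat) \<Rightarrow> quat" where
  "qform A x = (\<Sum>i\<in>{1..3::nat}. \<Sum>j\<in>{1..3::nat}. qcnj (x i) * A i j * x j)"

end

theory Submission imports Defs begin

definition qn :: "quat \<Rightarrow> real" where
  "qn a = qRe a ^ 2 + qI a ^ 2 + qJ a ^ 2 + qK a ^ 2"

lemma qn_nonneg: "qn a \<ge> 0" unfolding qn_def by simp

lemma qn_zero_iff: "qn a = 0 \<longleftrightarrow> a = 0"
proof
  assume "qn a = 0"
  then have "qRe a = 0 \<and> qI a = 0 \<and> qJ a = 0 \<and> qK a = 0"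
    unfolding qn_def by (smt (verit) zero_le_power2 power_eq_0_iff zero_less_numeral)
  then show "a = 0" by (auto intro: quat_eqI simp: zero_quat_def)
qed (simp add: qn_def zero_quat_def)

lemma of_real_quat: "(of_real r :: quat) = Quat r 0 0 0"
  by (simp add: of_real_def scaleR_quat_def one_quat_def)

lemma qcnj_mult_self: "qcnj a * a = of_real (qn a)"
  by (rule quat_eqI) (simp_all add: of_real_quat qcnj_def times_quat_def qn_def power2_eq_square algebra_simps)

lemma mult_qcnj_self: "a * qcnj a = of_real (qn a)"
  by (rule quat_eqI) (simp_all add: of_real_quat qcnj_def times_quat_def qn_def power2_eq_square algebra_simps)

lemma qcnj_mult: "qcnj (a * b) = qcnj b * qcnj a"
  by (rule quat_eqI) (simp_all add: qcnj_def times_quat_def algebra_simps)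

lemma qcnj_add: "qcnj (a + b) = qcnj a + qcnj b"
  by (rule quat_eqI) (simp_all add: qcnj_def plus_quat_def)

lemma qcnj_scaleR: "qcnj (r *\<^sub>R a) = r *\<^sub>R qcnj a"
  by (rule quat_eqI) (simp_all add: qcnj_def scaleR_quat_def)

lemma qcnj_qcnj: "qcnj (qcnj a) = a"
  by (rule quat_eqI) (simp_all add: qcnj_def)

lemma qcnj_zero: "qcnj 0 = 0"
  by (rule quat_eqI) (simp_all add: qcnj_def zero_quat_def)

lemma qcnj_one: "qcnj 1 = 1"
  by (rule quat_eqI) (simp_all add: qcnj_def one_quat_def)

lemma qRe_add: "qRe (a + b) = qRe a + qRe b" by (simp add: plus_quat_def)
lemma qRe_diff: "qRe (a - b) = qRe a - qRe b" by (simp add: minus_quat_def)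
lemma qRe_scaleR: "qRe (r *\<^sub>R a) = r * qRe a" by (simp add: scaleR_quat_def)
lemma qRe_zero: "qRe 0 = 0" by (simp add: zero_quat_def)

lemma qRe_swap: "qRe (qcnj y * z) = qRe (qcnj z * y)"
  by (simp add: qcnj_def times_quat_def algebra_simps)

lemma qRe_swap3: "qRe (qcnj y * a * z) = qRe (qcnj z * (qcnj a * y))"
  by (simp add: qcnj_def times_quat_def algebra_simps)

lemma qRe_cnj_self: "qRe (qcnj h * h) = qn h"
  by (simp add: qcnj_mult_self of_real_quat)

lemma no_zero_div: fixes p y :: quat assumes "p * y = 0" "y \<noteq> 0" shows "p = 0"
proof -
  have "p * y * qcnj y = 0" using assms by simp
  then have "qn y *\<^sub>R p = 0"
    by (simp add: mult.assoc mult_qcnj_self of_real_def)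
  moreover have "qn y \<noteq> 0" using assms qn_zero_iff by auto
  ultimately show ?thesis by simp
qed

lemma term_expand:
  "qRe (qcnj (y1 + t *\<^sub>R z1) * a * (y2 + t *\<^sub>R z2)) =
   qRe (qcnj y1 * a * y2) + t * (qRe (qcnj z1 * (a * y2)) + qRe (qcnj z2 * (qcnj a * y1)))
   + t^2 * qRe (qcnj z1 * a * z2)"
  by (simp add: qcnj_def times_quat_def plus_quat_def scaleR_quat_def power2_eq_square algebra_simps)

lemma qn_expand: "qn (y + t *\<^sub>R z) = qn y + t * (2 * qRe (qcnj z * y)) + t^2 * qn z"
  by (simp add: qn_def qcnj_def times_quat_def plus_quat_def scaleR_quat_def power2_eq_square algebra_simps)

lemma qn_scale: "qn (c *\<^sub>R a) = c^2 * qn a"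
  by (simp add: qn_def scaleR_quat_def power2_eq_square algebra_simps)

lemma lin_quad: fixes a b :: real assumes "\<forall>t. t * a + t^2 * b \<le> 0" shows "a = 0"
proof -
  let ?t = "a / (\<bar>b\<bar> + 1)"
  have pos: "\<bar>b\<bar> + 1 > 0" by simp
  have "?t * a + ?t^2 * b \<le> 0" using assms by blast
  then have "(?t * a + ?t^2 * b) * (\<bar>b\<bar> + 1)^2 \<le> 0"
    by (simp add: mult_nonpos_nonneg)
  moreover have "\<And>c. c > 0 \<Longrightarrow> (a/c * a + (a/c)^2 * b) * c^2 = a^2 * c + a^2 * b"
    by (simp add: field_simps power2_eq_square)
  hence "(?t * a + ?t^2 * b) * (\<bar>b\<bar> + 1)^2 = a^2 * (\<bar>b\<bar> + 1) + a^2 * b"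
    using pos by blast
  ultimately have "a^2 * (\<bar>b\<bar> + 1) + a^2 * b \<le> 0" by simp
  then have "a^2 * (\<bar>b\<bar> + b + 1) \<le> 0" by (simp add: algebra_simps)
  moreover have "\<bar>b\<bar> + b + 1 > 0" by linarith
  ultimately have "a^2 \<le> 0" by (simp add: mult_le_0_iff)
  then show ?thesis by simp
qed


definition G :: "quat \<Rightarrow> quat \<Rightarrow> quat \<Rightarrow> quat \<Rightarrow> quat \<Rightarrow> quat \<Rightarrow> real" where
  "G a b c x1 x2 x3 = qRe (qcnj x1 * a * x2 + qcnj x1 * b * x3 + qcnj x2 * c * x3)"

definition q4 :: "real \<times> real \<times> real \<times> real \<Rightarrow> quat" where
  "q4 p = Quat (fst p) (fst (snd p)) (fst (snd (snd p))) (snd (snd (snd p)))"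

lemma norm_q4: "(norm p)^2 = qn (q4 p)"
  by (simp add: norm_prod_def q4_def qn_def)

lemma norm_triple: "(norm (p :: (real \<times> real \<times> real \<times> real) \<times> (real \<times> real \<times> real \<times> real) \<times> (real \<times> real \<times> real \<times> real)))^2
   = qn (q4 (fst p)) + qn (q4 (fst (snd p))) + qn (q4 (snd (snd p)))"
  by (simp add: norm_prod_def q4_def qn_def algebra_simps)

lemma G_exists_max:
  "\<exists>u1 u2 u3. qn u1 + qn u2 + qn u3 = 1 \<and>
     (\<forall>x1 x2 x3. qn x1 + qn x2 + qn x3 = 1 \<longrightarrow> G a b c x1 x2 x3 \<le> G a b c u1 u2 u3)"
proof -
  let ?K = "sphere (0 :: (real \<times> real \<times> real \<times> real) \<times> (real \<times> real \<times> real \<times> real) \<times> (real \<times> real \<times> real \<times> real)) 1"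
  let ?h = "\<lambda>p. G a b c (q4 (fst p)) (q4 (fst (snd p))) (q4 (snd (snd p)))"
  have cont: "continuous_on ?K ?h"
    unfolding G_def q4_def qcnj_def times_quat_def plus_quat_def
    by (simp, intro continuous_intros)
  have "?K \<noteq> {}" by simp
  then obtain p where p: "p \<in> ?K" and pmax: "\<forall>r\<in>?K. ?h r \<le> ?h p"
    using continuous_attains_sup[OF compact_sphere _ cont] by blast
  have sph: "\<And>r. r \<in> ?K \<longleftrightarrow> qn (q4 (fst r)) + qn (q4 (fst (snd r))) + qn (q4 (snd (snd r))) = 1"
  proof -
    fix r
    have "r \<in> ?K \<longleftrightarrow> (norm r)^2 = 1" using power2_eq_1_iff[of "norm r"] norm_ge_zero[of r] by (auto simp add: dist_norm)
    then show "?thesis r" by (simp add: norm_triple)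
  qed
  define un :: "quat \<Rightarrow> real \<times> real \<times> real \<times> real" where "un x = (qRe x, qI x, qJ x, qK x)" for x
  have qun: "q4 (un x) = x" for x by (cases x) (simp add: un_def q4_def)
  show ?thesis
  proof (intro exI conjI allI impI)
    show "qn (q4 (fst p)) + qn (q4 (fst (snd p))) + qn (q4 (snd (snd p))) = 1" using p sph by blast
    fix x1 x2 x3 assume "qn x1 + qn x2 + qn x3 = 1"
    then have "(un x1, un x2, un x3) \<in> ?K" using sph[of "(un x1, un x2, un x3)"] by (simp add: qun)
    then show "G a b c x1 x2 x3 \<le> ?h p" using pmax by (metis fst_conv snd_conv qun)
  qed
qed


lemma G_scale: "G a b c (k *\<^sub>R x1) (k *\<^sub>R x2) (k *\<^sub>R x3) = k^2 * G a b c x1 x2 x3"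
  by (simp add: G_def qcnj_scaleR qRe_add qRe_scaleR power2_eq_square algebra_simps)

lemma G_zero: "G a b c 0 0 0 = 0"
  by (simp add: G_def qcnj_zero qRe_zero)

lemma G_homog:
  assumes max: "\<forall>x1 x2 x3. qn x1 + qn x2 + qn x3 = 1 \<longrightarrow> G a b c x1 x2 x3 \<le> M"
  shows "G a b c w1 w2 w3 \<le> M * (qn w1 + qn w2 + qn w3)"
proof (cases "qn w1 + qn w2 + qn w3 = 0")
  case True
  then have "qn w1 = 0" "qn w2 = 0" "qn w3 = 0" using qn_nonneg[of w1] qn_nonneg[of w2] qn_nonneg[of w3] by linarith+
  then have "w1 = 0" "w2 = 0" "w3 = 0" by (simp_all add: qn_zero_iff)
  moreover have "qn 0 = 0" by (simp add: qn_zero_iff)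
  ultimately show ?thesis by (simp add: G_zero)
next
  case False
  define n where "n = qn w1 + qn w2 + qn w3"
  have npos: "n > 0" using False qn_nonneg[of w1] qn_nonneg[of w2] qn_nonneg[of w3] unfolding n_def by linarith
  define k where "k = 1 / sqrt n"
  have k2: "k^2 = 1 / n" using npos by (simp add: k_def power_divide)
  have "qn (k *\<^sub>R w1) + qn (k *\<^sub>R w2) + qn (k *\<^sub>R w3) = 1"
    using npos by (simp add: qn_scale k2 n_def add_divide_distrib[symmetric])
  then have "k^2 * G a b c w1 w2 w3 \<le> M" using max G_scale by metis
  then have "G a b c w1 w2 w3 / n \<le> M" using k2 by simp
  then show ?thesis using npos by (simp add: n_def[symmetric] pos_divide_le_eq mult.commute)
qed

lemma G_expand:
  "G a b c (y1 + t *\<^sub>R z1) (y2 + t *\<^sub>R z2) (y3 + t *\<^sub>R z3) =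
   G a b c y1 y2 y3 + t * (qRe (qcnj z1 * (a * y2 + b * y3)) + qRe (qcnj z2 * (qcnj a * y1 + c * y3))
     + qRe (qcnj z3 * (qcnj b * y1 + qcnj c * y2))) + t^2 * G a b c z1 z2 z3"
  unfolding G_def qRe_add term_expand by (simp add: distrib_left qRe_add algebra_simps)

lemma stationary:
  assumes hom: "\<And>w1 w2 w3. G a b c w1 w2 w3 \<le> M * (qn w1 + qn w2 + qn w3)"
    and ys: "qn y1 + qn y2 + qn y3 = 1" and yM: "G a b c y1 y2 y3 = M"
  shows "a * y2 + b * y3 = (2*M) *\<^sub>R y1 \<and> qcnj a * y1 + c * y3 = (2*M) *\<^sub>R y2
     \<and> qcnj b * y1 + qcnj c * y2 = (2*M) *\<^sub>R y3"
proof -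
  define h1 where "h1 = a * y2 + b * y3 - (2*M) *\<^sub>R y1"
  define h2 where "h2 = qcnj a * y1 + c * y3 - (2*M) *\<^sub>R y2"
  define h3 where "h3 = qcnj b * y1 + qcnj c * y2 - (2*M) *\<^sub>R y3"
  have e1: "a * y2 + b * y3 = h1 + (2*M) *\<^sub>R y1" by (simp add: h1_def)
  have e2: "qcnj a * y1 + c * y3 = h2 + (2*M) *\<^sub>R y2" by (simp add: h2_def)
  have e3: "qcnj b * y1 + qcnj c * y2 = h3 + (2*M) *\<^sub>R y3" by (simp add: h3_def)
  have "M * (qn y1 + qn y2 + qn y3) = M" using ys by simp
  then have mm: "M * qn y1 + (M * qn y2 + M * qn y3) = M" by (simp add: algebra_simps)
  have "\<forall>t. t * (qn h1 + qn h2 + qn h3) + t^2 * (G a b c h1 h2 h3 - M * (qn h1 + qn h2 + qn h3)) \<le> 0"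
  proof
    fix t :: real
    have "G a b c (y1 + t *\<^sub>R h1) (y2 + t *\<^sub>R h2) (y3 + t *\<^sub>R h3)
        \<le> M * (qn (y1 + t *\<^sub>R h1) + qn (y2 + t *\<^sub>R h2) + qn (y3 + t *\<^sub>R h3))" by (rule hom)
    then show "t * (qn h1 + qn h2 + qn h3) + t^2 * (G a b c h1 h2 h3 - M * (qn h1 + qn h2 + qn h3)) \<le> 0"
      unfolding G_expand qn_expand e1 e2 e3 distrib_left qRe_add qRe_scaleR mult_scaleR_right qRe_cnj_self
      using ys yM by (simp add: algebra_simps) (insert mm, linarith)
  qed
  then have "qn h1 + qn h2 + qn h3 = 0" by (rule lin_quad)
  then have "qn h1 = 0" "qn h2 = 0" "qn h3 = 0" using qn_nonneg[of h1] qn_nonneg[of h2] qn_nonneg[of h3] by linarith+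
  then have "h1 = 0" "h2 = 0" "h3 = 0" by (simp_all add: qn_zero_iff)
  then show ?thesis using e1 e2 e3 by simp
qed


lemma sphere_iff: "x \<in> unit_sphere_H3 \<longleftrightarrow> qn (x 1) + qn (x 2) + qn (x 3) = 1"
proof -
  have s: "{1..3::nat} = {1,2,3}" by auto
  have "(\<Sum>i\<in>{1..3::nat}. qcnj (x i) * x i) = of_real (qn (x 1) + qn (x 2) + qn (x 3))"
    unfolding s by (simp add: qcnj_mult_self)
  then show ?thesis unfolding unit_sphere_H3_def by (simp del: of_real_add)
qed

lemma qform_upper:
  assumes upper: "\<forall>i\<in>{1..3::nat}. \<forall>j\<in>{1..3::nat}. j \<le> i \<longrightarrow> A i j = 0"
  shows "qRe (qform A x) = G (A 1 2) (A 1 3) (A 2 3) (x 1) (x 2) (x 3)"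
proof -
  have s: "{1..3::nat} = {1,2,3}" by auto
  have "A 1 1 = 0" "A 2 1 = 0" "A 2 2 = 0" "A 3 1 = 0" "A 3 2 = 0" "A 3 3 = 0" using upper by auto
  then show ?thesis unfolding qform_def G_def s by (simp add: algebra_simps)
qed

lemma real_nz: "c \<noteq> 0 \<Longrightarrow> (of_real c :: quat) \<in> \<real> - {0}"
  by simp

theorem lemma5p2:
  fixes A :: "nat \<Rightarrow> nat \<Rightarrow> quat" and y :: "nat \<Rightarrow> quat"
  assumes upper: "\<forall>i\<in>{1..3::nat}. \<forall>j\<in>{1..3::nat}. j \<le> i \<longrightarrow> A i j = 0"
    and indep: "\<forall>r s :: real. r *\<^sub>R A 1 2 + s *\<^sub>R (A 1 3 * qcnj (A 2 3)) = 0 \<longrightarrow> r = 0 \<and> s = 0"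
    and y_sphere: "y \<in> unit_sphere_H3"
    and y_max: "qRe (qform A y) = (GREATEST m. m \<in> (\<lambda>x. qRe (qform A x)) ` unit_sphere_H3)"
  shows "qcnj (y 1) * (A 1 2 * y 2 + A 1 3 * y 3) \<in> \<real> - {0} \<and>
         qcnj (y 2) * (qcnj (A 1 2) * y 1 + A 2 3 * y 3) \<in> \<real> - {0} \<and>
         (qcnj (y 1) * A 1 3 + qcnj (y 2) * A 2 3) * y 3 \<in> \<real> - {0}"
proof -
  define a where "a = A 1 2"
  define b where "b = A 1 3"
  define c where "c = A 2 3"
  have F: "\<And>x. qRe (qform A x) = G a b c (x 1) (x 2) (x 3)"
    unfolding a_def b_def c_def by (rule qform_upper[OF upper])
  obtain u1 u2 u3 where u: "qn u1 + qn u2 + qn u3 = 1"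
    and umax: "\<forall>x1 x2 x3. qn x1 + qn x2 + qn x3 = 1 \<longrightarrow> G a b c x1 x2 x3 \<le> G a b c u1 u2 u3"
    using G_exists_max by blast
  define u where "u = (\<lambda>i::nat. if i = 1 then u1 else if i = 2 then u2 else u3)"
  have usph: "u \<in> unit_sphere_H3" using u by (simp add: sphere_iff u_def)
  define M where "M = G a b c u1 u2 u3"
  have gr: "(GREATEST m. m \<in> (\<lambda>x. qRe (qform A x)) ` unit_sphere_H3) = M"
  proof (rule Greatest_equality)
    show "M \<in> (\<lambda>x. qRe (qform A x)) ` unit_sphere_H3"
      using usph by (auto simp: F M_def u_def intro!: image_eqI[of _ _ u])
    show "\<And>m. m \<in> (\<lambda>x. qRe (qform A x)) ` unit_sphere_H3 \<Longrightarrow> m \<le> M"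
      using umax by (auto simp: F M_def sphere_iff)
  qed
  have ys: "qn (y 1) + qn (y 2) + qn (y 3) = 1" using y_sphere by (simp add: sphere_iff)
  have yM: "G a b c (y 1) (y 2) (y 3) = M" using y_max gr F by simp
  have maxall: "\<forall>x1 x2 x3. qn x1 + qn x2 + qn x3 = 1 \<longrightarrow> G a b c x1 x2 x3 \<le> M"
    using umax M_def by simp
  have hom: "\<And>w1 w2 w3. G a b c w1 w2 w3 \<le> M * (qn w1 + qn w2 + qn w3)"
    by (rule G_homog[OF maxall])
  have st: "a * y 2 + b * y 3 = (2*M) *\<^sub>R y 1 \<and> qcnj a * y 1 + c * y 3 = (2*M) *\<^sub>R y 2
     \<and> qcnj b * y 1 + qcnj c * y 2 = (2*M) *\<^sub>R y 3"
    by (rule stationary[OF hom ys yM])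
  then have e1: "a * y 2 + b * y 3 = (2*M) *\<^sub>R y 1"
    and e2: "qcnj a * y 1 + c * y 3 = (2*M) *\<^sub>R y 2"
    and e3: "qcnj b * y 1 + qcnj c * y 2 = (2*M) *\<^sub>R y 3" by auto
  have a0: "a \<noteq> 0" using indep[rule_format, of 1 0] by (auto simp: a_def)
  have Mpos: "M > 0"
  proof -
    have "G a b c a 1 0 \<le> M * (qn a + qn 1 + qn 0)" by (rule hom)
    moreover have "G a b c a 1 0 = qn a" by (simp add: G_def qRe_cnj_self qcnj_zero qRe_add)
    moreover have "qn a > 0" using a0 qn_nonneg[of a] qn_zero_iff[of a] by linarith
    moreover have "qn 1 = 1" "qn 0 = 0" by (simp_all add: qn_def one_quat_def zero_quat_def)
    ultimately show ?thesis by (smt (verit) mult_nonpos_nonneg qn_nonneg)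
  qed
  have res1: "qcnj (y 1) * (a * y 2 + b * y 3) = of_real (2 * M * qn (y 1))"
    using e1 by (simp add: qcnj_mult_self of_real_def)
  have res2: "qcnj (y 2) * (qcnj a * y 1 + c * y 3) = of_real (2 * M * qn (y 2))"
    using e2 by (simp add: qcnj_mult_self of_real_def)
  have "qcnj (y 1) * b + qcnj (y 2) * c = qcnj (qcnj b * y 1 + qcnj c * y 2)"
    by (simp add: qcnj_add qcnj_mult qcnj_qcnj)
  also have "\<dots> = (2*M) *\<^sub>R qcnj (y 3)" using e3 by (simp add: qcnj_scaleR)
  finally have res3: "(qcnj (y 1) * b + qcnj (y 2) * c) * y 3 = of_real (2 * M * qn (y 3))"
    by (simp add: qcnj_mult_self of_real_def)
  have qn0: "qn 0 = 0" by (simp add: qn_zero_iff)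
  have M2: "2 * M \<noteq> 0" using Mpos by simp
  have y1nz: "y 1 \<noteq> 0"
  proof
    assume z: "y 1 = 0"
    have y3: "y 3 \<noteq> 0"
    proof
      assume "y 3 = 0"
      then have "y 2 = 0" using e2 z M2 by simp
      then show False using ys z \<open>y 3 = 0\<close> qn0 by simp
    qed
    have "(a * c + (2*M) *\<^sub>R b) * y 3 = a * (c * y 3) + (2*M) *\<^sub>R (b * y 3)"
      by (simp add: algebra_simps)
    also have "\<dots> = (2*M) *\<^sub>R (a * y 2 + b * y 3)"
      using e2 z by (simp add: algebra_simps)
    also have "\<dots> = 0" using e1 z by simp
    finally have "a * c + (2*M) *\<^sub>R b = 0" using no_zero_div y3 by blast
    then have "(a * c + (2*M) *\<^sub>R b) * qcnj c = 0" by simp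
    then have "qn c *\<^sub>R a + (2*M) *\<^sub>R (b * qcnj c) = 0"
      by (simp add: algebra_simps mult_qcnj_self of_real_def)
    then have "2 * M = 0" using indep unfolding a_def b_def c_def by blast
    then show False using M2 by simp
  qed
  have y2nz: "y 2 \<noteq> 0"
  proof
    assume z: "y 2 = 0"
    have y1: "y 1 \<noteq> 0" using y1nz .
    have "((2*M) *\<^sub>R qcnj a + c * qcnj b) * y 1 = (2*M) *\<^sub>R (qcnj a * y 1) + c * (qcnj b * y 1)"
      by (simp add: algebra_simps)
    also have "\<dots> = (2*M) *\<^sub>R (qcnj a * y 1 + c * y 3)"
      using e3 z by (simp add: algebra_simps)
    also have "\<dots> = 0" using e2 z by simp
    finally have "(2*M) *\<^sub>R qcnj a + c * qcnj b = 0" using no_zero_div y1 by blast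
    then have "qcnj ((2*M) *\<^sub>R qcnj a + c * qcnj b) = 0" by (simp add: qcnj_zero)
    then have "(2*M) *\<^sub>R a + 1 *\<^sub>R (b * qcnj c) = 0"
      by (simp add: qcnj_add qcnj_mult qcnj_scaleR qcnj_qcnj)
    then have "(1::real) = 0" using indep unfolding a_def b_def c_def by blast
    then show False by simp
  qed
  have y3nz: "y 3 \<noteq> 0"
  proof
    assume z: "y 3 = 0"
    have "(qcnj b * a + (2*M) *\<^sub>R qcnj c) * y 2 = qcnj b * (a * y 2) + (2*M) *\<^sub>R (qcnj c * y 2)"
      by (simp add: algebra_simps)
    also have "\<dots> = (2*M) *\<^sub>R (qcnj b * y 1 + qcnj c * y 2)"
      using e1 z by (simp add: algebra_simps)
    also have "\<dots> = 0" using e3 z by simp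
    finally have "qcnj b * a + (2*M) *\<^sub>R qcnj c = 0" using no_zero_div y2nz by blast
    then have "b * (qcnj b * a + (2*M) *\<^sub>R qcnj c) = 0" by simp
    then have "qn b *\<^sub>R a + (2*M) *\<^sub>R (b * qcnj c) = 0"
      by (simp add: algebra_simps flip: mult.assoc) (simp add: mult_qcnj_self of_real_def)
    then have "2 * M = 0" using indep unfolding a_def b_def c_def by blast
    then show False using M2 by simp
  qed
  have p: "qn (y i) > 0" if "y i \<noteq> 0" for i
    using that qn_nonneg[of "y i"] qn_zero_iff[of "y i"] by linarith
  have "2 * M * qn (y 1) \<noteq> 0" "2 * M * qn (y 2) \<noteq> 0" "2 * M * qn (y 3) \<noteq> 0"
    using Mpos p[OF y1nz] p[OF y2nz] p[OF y3nz] by simp_all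
  then show ?thesis using res1 res2 res3 unfolding a_def b_def c_def
    by (metis real_nz)
qed

end
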